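(* Let $n\ge4$ and let $G$ be an almost simple primitive permutation group with socle $G_0$ equal to $\mathrm{PSp}_n(q)$, $\mathrm{PSU}_n(q)$, or $\mathrm{P\Omega}^\epsilon_n(q)$ with $(n,\epsilon)\ne(4,-)$, acting on the set $X$ of all non-degenerate $2$-dimensional subspaces of the natural module $V$, where in the orthogonal case $X$ consists of the non-degenerate $2$-spaces of type $\mathrm{O}_2^+$. Then $\mathrm{diam}(X,G)\ge 3$.
   Context: The natural module carries the non-degenerate alternating, hermitian, or quadratic form preserved by $G_0$; a subspace $W$ is non-degenerate if $W\cap W^\perp=0$. A non-degenerate $2$-space of an orthogonal space is of type $\mathrm{O}_2^+$ if it contains a non-zero singular vector, and of type $\mathrm{O}_2^-$ otherwise. An (undirected) orbital graph of $(X,G)$ has as edge set a single $G$-orbit on unordered $2$-subsets of $X$; $\mathrm{diam}(X,G)$ is the maximum diameter of such graphs. *)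

theory Defs
  imports "HOL-Analysis.Determinants" "HOL-Algebra.SimpleGroups" "HOL-Algebra.Generated_Groups"
          "HOL-Algebra.Bij" "HOL-Library.Extended_Nat"
begin

definition field_aut :: "('a::field \<Rightarrow> 'a) \<Rightarrow> bool" where
  "field_aut s \<longleftrightarrow> bij s \<and> (\<forall>x y. s (x + y) = s x + s y \<and> s (x * y) = s x * s y)"

definition linear_map :: "('a::field^'n \<Rightarrow> 'a^'n) \<Rightarrow> bool" where
  "linear_map g \<longleftrightarrow> (\<forall>u v. g (u + v) = g u + g v) \<and> (\<forall>c v. g (c *s v) = c *s g v)"

definition semilinear_with :: "('a::field \<Rightarrow> 'a) \<Rightarrow> ('a^'n \<Rightarrow> 'a^'n) \<Rightarrow> bool" where
  "semilinear_with s g \<longleftrightarrow> field_aut s \<and> bij g \<and>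
     (\<forall>u v. g (u + v) = g u + g v) \<and> (\<forall>c v. g (c *s v) = s c *s g v)"

definition two_space :: "('a::field^'n) set \<Rightarrow> bool" where
  "two_space W \<longleftrightarrow> (\<exists>u v. (\<forall>a b. a *s u + b *s v = 0 \<longrightarrow> a = 0 \<and> b = 0)
                        \<and> W = {a *s u + b *s v | a b. True})"

definition perp :: "('a^'n \<Rightarrow> 'a^'n \<Rightarrow> 'a::field) \<Rightarrow> ('a^'n) set \<Rightarrow> ('a^'n) set" where
  "perp B W = {v. \<forall>w\<in>W. B w v = 0}"

definition nondeg_subspace :: "('a^'n \<Rightarrow> 'a^'n \<Rightarrow> 'a::field) \<Rightarrow> ('a^'n) set \<Rightarrow> bool" where
  "nondeg_subspace B W \<longleftrightarrow> W \<inter> perp B W = {0}"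

definition nondeg_form :: "('a^'n \<Rightarrow> 'a^'n \<Rightarrow> 'a::field) \<Rightarrow> bool" where
  "nondeg_form B \<longleftrightarrow> (\<forall>u. (\<forall>v. B u v = 0) \<longrightarrow> u = 0)"

definition left_linear :: "('a^'n \<Rightarrow> 'a^'n \<Rightarrow> 'a::field) \<Rightarrow> bool" where
  "left_linear B \<longleftrightarrow> (\<forall>u v w. B (u + v) w = B u w + B v w) \<and> (\<forall>c u w. B (c *s u) w = c * B u w)"

definition bilinear_form :: "('a^'n \<Rightarrow> 'a^'n \<Rightarrow> 'a::field) \<Rightarrow> bool" where
  "bilinear_form B \<longleftrightarrow> left_linear B \<and> left_linear (\<lambda>u v. B v u)"

definition symplectic_form :: "('a^'n \<Rightarrow> 'a^'n \<Rightarrow> 'a::field) \<Rightarrow> bool" where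
  "symplectic_form B \<longleftrightarrow> bilinear_form B \<and> (\<forall>v. B v v = 0) \<and> nondeg_form B"

definition hermitian_form :: "('a::field \<Rightarrow> 'a) \<Rightarrow> ('a^'n \<Rightarrow> 'a^'n \<Rightarrow> 'a) \<Rightarrow> bool" where
  "hermitian_form t B \<longleftrightarrow> field_aut t \<and> (\<forall>x. t (t x) = x) \<and> (\<exists>x. t x \<noteq> x) \<and>
     left_linear B \<and> (\<forall>u v. B v u = t (B u v)) \<and> nondeg_form B"

definition polar :: "('a^'n \<Rightarrow> 'a::field) \<Rightarrow> 'a^'n \<Rightarrow> 'a^'n \<Rightarrow> 'a" where
  "polar Q u v = Q (u + v) - Q u - Q v"

definition nondeg_quadratic_form :: "('a^'n \<Rightarrow> 'a::field) \<Rightarrow> bool" where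
  "nondeg_quadratic_form Q \<longleftrightarrow> (\<forall>c v. Q (c *s v) = c^2 * Q v) \<and> bilinear_form (polar Q)
     \<and> nondeg_form (polar Q)"

text \<open>Plus type in dimension 4: Witt index 2, i.e. a totally singular 2-space exists.\<close>
definition has_tot_singular_2space :: "('a^'n \<Rightarrow> 'a::field) \<Rightarrow> bool" where
  "has_tot_singular_2space Q \<longleftrightarrow> (\<exists>W. two_space W \<and> (\<forall>w\<in>W. Q w = 0))"

abbreviation GV :: "('a^'n \<Rightarrow> 'a^'n) monoid" where
  "GV \<equiv> BijGroup UNIV"

definition Sp_group :: "('a^'n \<Rightarrow> 'a^'n \<Rightarrow> 'a::field) \<Rightarrow> ('a^'n \<Rightarrow> 'a^'n) set" where
  "Sp_group B = {g. bij g \<and> linear_map g \<and> (\<forall>u v. B (g u) (g v) = B u v)}"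

definition SU_group :: "('a^'n \<Rightarrow> 'a^'n \<Rightarrow> 'a::field) \<Rightarrow> ('a^'n::finite \<Rightarrow> 'a^'n) set" where
  "SU_group B = {g. bij g \<and> linear_map g \<and> (\<forall>u v. B (g u) (g v) = B u v) \<and> det (matrix g) = 1}"

definition O_group :: "('a^'n \<Rightarrow> 'a::field) \<Rightarrow> ('a^'n \<Rightarrow> 'a^'n) set" where
  "O_group Q = {g. bij g \<and> linear_map g \<and> (\<forall>v. Q (g v) = Q v)}"

definition Omega_group :: "('a^'n \<Rightarrow> 'a::field) \<Rightarrow> ('a^'n \<Rightarrow> 'a^'n) set" where
  "Omega_group Q = derived GV (O_group Q)"

definition simil_B :: "('a^'n \<Rightarrow> 'a^'n \<Rightarrow> 'a::field) \<Rightarrow> ('a^'n \<Rightarrow> 'a^'n) set" where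
  "simil_B B = {g. \<exists>s l. semilinear_with s g \<and> l \<noteq> 0 \<and> (\<forall>u v. B (g u) (g v) = l * s (B u v))}"

definition simil_Q :: "('a^'n \<Rightarrow> 'a::field) \<Rightarrow> ('a^'n \<Rightarrow> 'a^'n) set" where
  "simil_Q Q = {g. \<exists>s l. semilinear_with s g \<and> l \<noteq> 0 \<and> (\<forall>v. Q (g v) = l * s (Q v))}"

text \<open>The three settings: X = set of points, Om = Sp / SU / Omega (quasisimple group on V),
  Gam = full group of semilinear similitudes of the form.\<close>
definition classical_setting ::
  "('a::field^'n::finite) set set \<Rightarrow> ('a^'n \<Rightarrow> 'a^'n) set \<Rightarrow> ('a^'n \<Rightarrow> 'a^'n) set \<Rightarrow> bool" where
  "classical_setting X Om Gam \<longleftrightarrow>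
     (\<exists>B. symplectic_form B \<and> X = {W. two_space W \<and> nondeg_subspace B W}
          \<and> Om = Sp_group B \<and> Gam = simil_B B)
   \<or> (\<exists>t B. hermitian_form t B \<and> X = {W. two_space W \<and> nondeg_subspace B W}
          \<and> Om = SU_group B \<and> Gam = simil_B B)
   \<or> (\<exists>Q. nondeg_quadratic_form Q \<and> (CARD('n) = 4 \<longrightarrow> has_tot_singular_2space Q)
          \<and> X = {W. two_space W \<and> nondeg_subspace (polar Q) W \<and> (\<exists>v\<in>W. v \<noteq> 0 \<and> Q v = 0)}
          \<and> Om = Omega_group Q \<and> Gam = simil_Q Q)"

definition induced_perm :: "'x set set \<Rightarrow> ('x \<Rightarrow> 'x) \<Rightarrow> ('x set \<Rightarrow> 'x set)" where
  "induced_perm X g = restrict (\<lambda>W. g ` W) X"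

definition perm_group :: "'p set \<Rightarrow> ('p \<Rightarrow> 'p) set \<Rightarrow> ('p \<Rightarrow> 'p) monoid" where
  "perm_group X G = (BijGroup X)\<lparr>carrier := G\<rparr>"

definition minimal_normal :: "('g, 'b) monoid_scheme \<Rightarrow> 'g set \<Rightarrow> bool" where
  "minimal_normal G N \<longleftrightarrow> N \<lhd> G \<and> N \<noteq> {\<one>\<^bsub>G\<^esub>} \<and>
     (\<forall>M. M \<lhd> G \<and> M \<subseteq> N \<longrightarrow> M = {\<one>\<^bsub>G\<^esub>} \<or> M = N)"

definition socle :: "('g, 'b) monoid_scheme \<Rightarrow> 'g set" where
  "socle G = generate G (\<Union>{N. minimal_normal G N})"

definition almost_simple_with_socle :: "('g, 'b) monoid_scheme \<Rightarrow> 'g set \<Rightarrow> bool" where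
  "almost_simple_with_socle G S \<longleftrightarrow> group G \<and> socle G = S \<and>
     simple_group (G\<lparr>carrier := S\<rparr>) \<and> \<not> comm_group (G\<lparr>carrier := S\<rparr>)"

definition primitive_on :: "'p set \<Rightarrow> ('p \<Rightarrow> 'p) set \<Rightarrow> bool" where
  "primitive_on X G \<longleftrightarrow> X \<noteq> {} \<and> (\<forall>x\<in>X. \<forall>y\<in>X. \<exists>g\<in>G. g x = y) \<and>
     (\<forall>B. B \<subseteq> X \<and> B \<noteq> {} \<and> (\<forall>g\<in>G. g ` B = B \<or> g ` B \<inter> B = {}) \<longrightarrow> card B = 1 \<or> B = X)"

text \<open>Edge sets of the undirected orbital graphs: G-orbits on 2-subsets of X.\<close>
definition uorbitals :: "'p set \<Rightarrow> ('p \<Rightarrow> 'p) set \<Rightarrow> 'p set set set" where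
  "uorbitals X G = {(\<lambda>g. g ` e) ` G | e. e \<subseteq> X \<and> card e = 2}"

definition walk :: "'p set set \<Rightarrow> nat \<Rightarrow> 'p \<Rightarrow> 'p \<Rightarrow> bool" where
  "walk E k u v \<longleftrightarrow> (\<exists>p. p 0 = u \<and> p k = v \<and> (\<forall>i<k. {p i, p (Suc i)} \<in> E))"

definition gdist :: "'p set set \<Rightarrow> 'p \<Rightarrow> 'p \<Rightarrow> enat" where
  "gdist E u v = (INF k \<in> {k. walk E k u v}. enat k)"

definition graph_diam :: "'p set \<Rightarrow> 'p set set \<Rightarrow> enat" where
  "graph_diam X E = (SUP u\<in>X. SUP v\<in>X. gdist E u v)"

text \<open>diam(X,G): maximum diameter of the orbital graphs (infinite if disconnected).\<close>
definition diam :: "'p set \<Rightarrow> ('p \<Rightarrow> 'p) set \<Rightarrow> enat" where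
  "diam X G = (SUP E\<in>uorbitals X G. graph_diam X E)"

end

theory Submission
  imports Defs
begin

definition sp :: "'a::field^'n \<Rightarrow> 'a^'n \<Rightarrow> ('a^'n) set" where
  "sp x y = {a *s x + b *s y | a b. True}"

definition indep :: "'a::field^'n \<Rightarrow> 'a^'n \<Rightarrow> bool" where
  "indep x y \<longleftrightarrow> (\<forall>a b. a *s x + b *s y = 0 \<longrightarrow> a = 0 \<and> b = 0)"

lemma two_space_sp: "two_space W \<longleftrightarrow> (\<exists>u v. indep u v \<and> W = sp u v)"
  unfolding two_space_def indep_def sp_def by auto

lemma field_aut_basic:
  assumes "field_aut s"
  shows "s 0 = 0" "s x = 0 \<longleftrightarrow> x = 0" "s (a - b) = s a - s b" "inj s" "surj s"
proof -
  have add: "\<And>x y. s (x + y) = s x + s y" using assms unfolding field_aut_def by auto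
  have b: "bij s" using assms unfolding field_aut_def by auto
  have "s 0 + s 0 = s 0 + 0" using add[of 0 0] by simp
  then show s0: "s 0 = 0" by (rule add_left_imp_eq)
  show "inj s" "surj s" using b by (auto simp: bij_def)
  then show "s x = 0 \<longleftrightarrow> x = 0" using s0 by (metis injD)
  show "s (a - b) = s a - s b" using add[of "a - b" b] by (simp add: eq_diff_eq)
qed

lemma vec_lin_eq: "a *s (x::'a::field^'n) + b *s y = (\<chi> i. a * x$i + b * y$i)"
  by (simp add: vec_eq_iff)

lemma field_aut_props:
  assumes "field_aut t"
  shows "t 0 = 0" "t 1 = 1" "t (x * y) = t x * t y" "t (x + y) = t x + t y"
    "t (- x) = - t x" "t (x - y) = t x - t y" "t x = 0 \<longleftrightarrow> x = 0"
    "t (inverse x) = inverse (t x)" "t (x / y) = t x / t y" "inj t" "surj t"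
proof -
  have add: "\<And>x y. t (x + y) = t x + t y" and mul: "\<And>x y. t (x * y) = t x * t y"
    and b: "bij t" using assms unfolding field_aut_def by blast+
  show inj: "inj t" and "surj t" using b by (auto simp: bij_def)
  have "t 0 + t 0 = t 0 + 0" using add[of 0 0] by simp
  then show t0: "t 0 = 0" by (rule add_left_imp_eq)
  show tz: "t x = 0 \<longleftrightarrow> x = 0" for x using inj t0 by (metis injD)
  have "t 1 * t 1 = t 1 * 1" using mul[of 1 1] by simp
  moreover have "t 1 \<noteq> 0" using tz[of 1] by simp
  ultimately show t1: "t 1 = 1" by simp
  show "t (x * y) = t x * t y" by (rule mul)
  show "t (x + y) = t x + t y" by (rule add)
  have tn: "t (- x) = - t x" for x
  proof -
    have "t x + t (- x) = 0" using add[of x "- x"] t0 by simp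
    then show ?thesis by (simp add: add_eq_0_iff)
  qed
  show "t (- x) = - t x" by (rule tn)
  show "t (x - y) = t x - t y" using add[of x "- y"] tn[of y] by simp
  show ti: "t (inverse x) = inverse (t x)" for x
  proof (cases "x = 0")
    case True then show ?thesis using t0 by simp
  next
    case False
    have "t x * t (inverse x) = 1" using mul[of x "inverse x"] False t1 by simp
    then show ?thesis by (metis inverse_unique)
  qed
  show "t (x / y) = t x / t y" using mul[of x "inverse y"] ti[of y] by (simp add: divide_inverse)
qed

lemma inj_on_card_le:
  assumes "inj_on f A" "f ` A \<subseteq> B" "finite B"
  shows "card A \<le> card B"
  using assms card_inj_on_le by blast

lemma norm_surj:
  fixes t :: "'a::{field,finite} \<Rightarrow> 'a"
  assumes fa: "field_aut t" and inv: "\<And>x. t (t x) = x" and nt: "\<exists>x. t x \<noteq> x"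
    and c: "t c = c" "c \<noteq> 0"
  shows "\<exists>l. l * t l = c"
proof -
  note tp = field_aut_props[OF fa]
  define K where "K = {x. t x = x}"
  define k where "k = card K"
  obtain \<theta> where th: "t \<theta> \<noteq> \<theta>" using nt by blast
  have thd: "\<theta> - t \<theta> \<noteq> 0" using th by simp
  have K01: "0 \<in> K" "1 \<in> K" unfolding K_def using tp by auto
  have fK: "finite K" by simp
  have k2: "2 \<le> k"
  proof -
    have "card {0::'a, 1} \<le> k" unfolding k_def using K01 by (intro card_mono) auto
    then show ?thesis by simp
  qed
  have bij: "bij_betw (\<lambda>(a, b). a + b * \<theta>) (K \<times> K) UNIV"
    unfolding bij_betw_def
  proof
    show "inj_on (\<lambda>(a, b). a + b * \<theta>) (K \<times> K)"
    proof (rule inj_onI, clarify)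
      fix a b a' b' assume m: "a \<in> K" "b \<in> K" "a' \<in> K" "b' \<in> K" and eq: "a + b * \<theta> = a' + b' * \<theta>"
      have "t (a + b * \<theta>) = t (a' + b' * \<theta>)" using eq by simp
      then have eq2: "a + b * t \<theta> = a' + b' * t \<theta>" using m unfolding K_def by (simp add: tp)
      have "(b - b') * (\<theta> - t \<theta>) = 0" using eq eq2 by algebra
      then have "b = b'" using thd by simp
      then show "a = a' \<and> b = b'" using eq by simp
    qed
    show "(\<lambda>(a, b). a + b * \<theta>) ` (K \<times> K) = UNIV"
    proof -
      have "x \<in> (\<lambda>(a, b). a + b * \<theta>) ` (K \<times> K)" for x
      proof -
      define b where "b = (x - t x) / (\<theta> - t \<theta>)"
      define a where "a = x - b * \<theta>"
      have tb: "t b = b" unfolding b_def using thd by (simp add: tp inv) (simp add: field_simps)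
      have "t a = a" unfolding a_def
        using tb thd by (simp add: tp inv) (simp add: b_def field_simps)
      then have "a \<in> K" "b \<in> K" using tb unfolding K_def by auto
      moreover have "x = a + b * \<theta>" unfolding a_def by simp
      ultimately show "x \<in> (\<lambda>(a, b). a + b * \<theta>) ` (K \<times> K)" by force
      qed
      then show ?thesis by blast
    qed
  qed
  have cardF: "CARD('a) = k * k"
    using bij_betw_same_card[OF bij] unfolding k_def by (simp add: card_cartesian_product)
  define Fs where "Fs = (UNIV :: 'a set) - {0}"
  have cardFs: "card Fs = k * k - 1" unfolding Fs_def using cardF by (simp add: card_Diff_singleton)
  have cardK0: "card (K - {0}) = k - 1" unfolding k_def using K01 by (simp add: card_Diff_singleton)
  define Nm where "Nm l = l * t l" for l
  define ph where "ph m = m / t m" for m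
  define ker where "ker = {l. Nm l = 1}"
  have NmK: "Nm l \<in> K - {0}" if "l \<in> Fs" for l
    using that unfolding Nm_def K_def Fs_def by (auto simp: tp inv mult.commute)
  have Nm_mult: "Nm (a / b) = Nm a / Nm b" for a b unfolding Nm_def by (simp add: tp)
  have H90: "ker \<subseteq> ph ` Fs"
  proof
    fix l assume "l \<in> ker"
    then have l: "l * t l = 1" unfolding ker_def Nm_def by simp
    then have l0: "l \<noteq> 0" by auto
    have tl: "t l = inverse l" using l by (metis inverse_unique)
    show "l \<in> ph ` Fs"
    proof (cases "l = -1")
      case True
      define m where "m = \<theta> - t \<theta>"
      have tm: "t m = - m" unfolding m_def by (simp add: tp inv)
      have m0: "m \<noteq> 0" unfolding m_def using thd .
      have "ph m = m / (- m)" unfolding ph_def using tm by simp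
      then have "ph m = -1" using m0 by simp
      moreover have "m \<in> Fs" unfolding Fs_def m_def using thd by simp
      ultimately show ?thesis using True by force
    next
      case False
      define m where "m = 1 + l"
      have m0: "m \<noteq> 0" unfolding m_def using False by (metis add.commute add_eq_0_iff)
      have "t m = 1 + inverse l" unfolding m_def by (simp add: tp tl)
      then have tm2: "t m = m / l" using l0 unfolding m_def by (simp add: field_simps)
      have "ph m = m / (m / l)" unfolding ph_def using tm2 by simp
      then have "ph m = l" using m0 l0 by simp
      moreover have "m \<in> Fs" unfolding Fs_def using m0 by simp
      ultimately show ?thesis by force
    qed
  qed
  define r where "r v = (SOME m. m \<in> Fs \<and> ph m = v)" for v
  have r: "r v \<in> Fs \<and> ph (r v) = v" if "v \<in> ph ` Fs" for v
    unfolding r_def using that by (metis (mono_tags, lifting) imageE someI)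
  have A_le: "card (ph ` Fs) * (k - 1) \<le> card Fs"
  proof -
    have "inj_on (\<lambda>(v, x). r v * x) (ph ` Fs \<times> (K - {0}))"
    proof (rule inj_onI)
      fix p1 p2 assume p1: "p1 \<in> ph ` Fs \<times> (K - {0})" and p2: "p2 \<in> ph ` Fs \<times> (K - {0})"
        and eqp: "(\<lambda>(v, x). r v * x) p1 = (\<lambda>(v, x). r v * x) p2"
      obtain v x where pp1: "p1 = (v, x)" by (cases p1)
      obtain v' x' where pp2: "p2 = (v', x')" by (cases p2)
      note pp = pp1 pp2
      have m: "v \<in> ph ` Fs" "x \<in> K" "x \<noteq> 0" "v' \<in> ph ` Fs" "x' \<in> K" "x' \<noteq> 0"
        using p1 p2 unfolding pp by blast+
      have eq: "r v * x = r v' * x'" using eqp pp by simp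
      have rv: "r v \<in> Fs" "ph (r v) = v" "r v' \<in> Fs" "ph (r v') = v'"
        using r[OF m(1)] r[OF m(4)] by blast+
      have phx: "ph (z * y) = ph z" if zy: "z \<in> Fs" "y \<in> K" "y \<noteq> 0" for z y
      proof -
        have ty: "t y = y" using zy(2) unfolding K_def by blast
        have "t (z * y) = t z * y" using ty tp(3) by simp
        then have "ph (z * y) = (z * y) / (t z * y)" unfolding ph_def by simp
        then show ?thesis unfolding ph_def using zy(3) by simp
      qed
      have "v = ph (r v * x)" using phx[OF rv(1) m(2,3)] rv(2) by simp
      moreover have "v' = ph (r v' * x')" using phx[OF rv(3) m(5,6)] rv(4) by simp
      ultimately have "v = v'" using eq by simp
      moreover have "r v \<noteq> 0" using rv(1) unfolding Fs_def by blast
      ultimately have "x = x'" using eq by simp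
      then show "p1 = p2" using pp \<open>v = v'\<close> by simp
    qed
    moreover have "(\<lambda>(v, x). r v * x) ` (ph ` Fs \<times> (K - {0})) \<subseteq> Fs"
    proof
      fix y assume "y \<in> (\<lambda>(v, x). r v * x) ` (ph ` Fs \<times> (K - {0}))"
      then obtain vx0 where vx0: "vx0 \<in> ph ` Fs \<times> (K - {0})" "y = (\<lambda>(v, x). r v * x) vx0" by (rule imageE)
      obtain v x where "vx0 = (v, x)" by (cases vx0)
      then have vx: "v \<in> ph ` Fs" "x \<in> K - {0}" "y = r v * x" using vx0 by auto
      have "r v \<in> Fs" using r[OF vx(1)] by blast
      then show "y \<in> Fs" using vx unfolding Fs_def by simp
    qed
    moreover have "finite Fs" by simp
    ultimately have "card (ph ` Fs \<times> (K - {0})) \<le> card Fs" by (rule inj_on_card_le)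
    then show ?thesis using cardK0 by (simp add: card_cartesian_product)
  qed
  define r' where "r' w = (SOME m. m \<in> Fs \<and> Nm m = w)" for w
  have r': "r' w \<in> Fs \<and> Nm (r' w) = w" if "w \<in> Nm ` Fs" for w
    unfolding r'_def using that by (metis (mono_tags, lifting) imageE someI)
  have B_le: "card Fs \<le> card (Nm ` Fs) * card ker"
  proof -
    have "inj_on (\<lambda>l. (Nm l, l / r' (Nm l))) Fs"
    proof (rule inj_onI)
      fix l l' assume m: "l \<in> Fs" "l' \<in> Fs" and eq: "(Nm l, l / r' (Nm l)) = (Nm l', l' / r' (Nm l'))"
      then have "r' (Nm l) \<in> Fs" using r' by blast
      then have nz: "r' (Nm l) \<noteq> 0" unfolding Fs_def by blast
      have e: "Nm l = Nm l' \<and> l / r' (Nm l) = l' / r' (Nm l')" using eq by (metis prod.inject)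
      then have "l / r' (Nm l) = l' / r' (Nm l)" by metis
      then show "l = l'" using nz by simp
    qed
    moreover have "(\<lambda>l. (Nm l, l / r' (Nm l))) ` Fs \<subseteq> Nm ` Fs \<times> ker"
    proof (rule subsetI)
      fix y assume "y \<in> (\<lambda>l. (Nm l, l / r' (Nm l))) ` Fs"
      then obtain l where l: "l \<in> Fs" and y: "y = (Nm l, l / r' (Nm l))" by (rule imageE)
      have "r' (Nm l) \<in> Fs" "Nm (r' (Nm l)) = Nm l" using r' l by blast+
      moreover have "Nm l \<noteq> 0" using NmK[OF l] by simp
      ultimately have "Nm (l / r' (Nm l)) = 1" using Nm_mult by simp
      then have "l / r' (Nm l) \<in> ker" unfolding ker_def by simp
      moreover have "Nm l \<in> Nm ` Fs" using l by (rule imageI)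
      ultimately show "y \<in> Nm ` Fs \<times> ker" using y by simp
    qed
    moreover have "finite (Nm ` Fs \<times> ker)" by simp
    ultimately have "card Fs \<le> card (Nm ` Fs \<times> ker)" by (rule inj_on_card_le)
    then show ?thesis by (simp add: card_cartesian_product)
  qed
  have C_le: "card ker \<le> card (ph ` Fs)" using H90 by (intro card_mono) auto
  define A where "A = card (ph ` Fs)"
  define B where "B = card (Nm ` Fs)"
  define C where "C = card ker"
  obtain j where kj: "k = Suc j" using k2 by (cases k) auto
  have j0: "0 < j" using k2 kj by simp
  have cF: "card Fs = j * (j + 2)" using cardFs kj by simp
  have "A * j \<le> (j + 2) * j" using A_le cF kj unfolding A_def by (simp add: mult.commute)
  then have A2: "A \<le> j + 2" using j0 by (metis mult_le_cancel2)
  have "j * (j + 2) \<le> B * C" using B_le cF unfolding B_def C_def by simp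
  also have "\<dots> \<le> B * A" using C_le unfolding A_def C_def by (rule mult_le_mono2)
  also have "\<dots> \<le> B * (j + 2)" using A2 by (rule mult_le_mono2)
  finally have "j * (j + 2) \<le> B * (j + 2)" .
  then have "j \<le> B" using mult_le_cancel2[of j "j + 2" B] by simp
  have sub: "Nm ` Fs \<subseteq> K - {0}" using NmK by (rule image_subsetI)
  have "card (K - {0}) = j" using cardK0 kj by simp
  then have "card (K - {0}) \<le> card (Nm ` Fs)" using \<open>j \<le> B\<close> unfolding B_def by simp
  moreover have "card (Nm ` Fs) \<le> card (K - {0})" using sub by (intro card_mono) auto
  ultimately have "card (Nm ` Fs) = card (K - {0})" by (rule antisym[rotated])
  then have eqN: "Nm ` Fs = K - {0}" using card_subset_eq[OF _ sub] by simp
  have "c \<in> K - {0}" using c unfolding K_def by simp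
  then have "c \<in> Nm ` Fs" using eqN by simp
  then obtain l where "Nm l = c" by (rule imageE) simp
  then show ?thesis unfolding Nm_def by blast
qed

lemma sq_sum:
  fixes a b c :: "'a::{field,finite}"
  assumes "a \<noteq> 0" "b \<noteq> 0"
  shows "\<exists>x y. a * x^2 + b * y^2 = c"
proof -
  define S where "S = range (\<lambda>x::'a. x^2)"
  define r where "r s = (SOME y. y^2 = s)" for s :: 'a
  define F where "F x = (x^2, x = r (x^2))" for x :: 'a
  have rr: "r (x^2) ^ 2 = x^2" for x unfolding r_def by (rule someI[of "\<lambda>y. y^2 = x^2" x]) simp
  have sq: "y = x \<or> y = - x" if "y^2 = x^2" for x y :: 'a
  proof -
    have "(y - x) * (y + x) = 0" using that by (simp add: algebra_simps power2_eq_square)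
    then show ?thesis by (auto simp: add_eq_0_iff)
  qed
  have injF: "inj F"
  proof (rule injI)
    fix x y assume "F x = F y"
    then have xy: "x^2 = y^2" and fl: "(x = r (x^2)) = (y = r (y^2))" unfolding F_def by (metis prod.inject)+
    show "x = y"
    proof (rule ccontr)
      assume ne: "x \<noteq> y"
      have ry: "r (y^2) = r (x^2)" using xy by simp
      have fl2: "(x = r (x^2)) = (y = r (x^2))" using fl ry by simp
      have "y = - x" using sq[of y x] xy[symmetric] ne by blast
      then have ryx: "r (x^2) = y \<or> r (x^2) = x" using sq[OF rr[of x]] by blast
      then show False
      proof
        assume "r (x^2) = y" then have "x = y" using fl2 by simp
        then show False using ne by blast
      next
        assume "r (x^2) = x" then have "y = x" using fl2 by simp
        then show False using ne by blast
      qed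
    qed
  qed
  have Fsub: "F ` UNIV \<subseteq> (S \<times> UNIV) - {(0, False)}"
  proof
    fix z assume "z \<in> F ` UNIV"
    then obtain x where z: "z = F x" by blast
    have "x^2 \<in> S" unfolding S_def by simp
    moreover have "z \<noteq> (0, False)"
    proof
      assume "z = (0, False)"
      then have x2: "x^2 = 0" and xr: "x \<noteq> r (x^2)" unfolding z F_def by (metis prod.inject)+
      have "r (x^2) ^ 2 = 0" using rr[of x] x2 by simp
      then have "r (x^2) = 0" by simp
      moreover have "x = 0" using x2 by simp
      ultimately show False using xr by simp
    qed
    ultimately show "z \<in> (S \<times> UNIV) - {(0, False)}" unfolding z F_def by simp
  qed
  have "0 \<in> S" unfolding S_def by (metis rangeI zero_power2)
  then have "card ((S \<times> (UNIV :: bool set)) - {(0, False)}) = 2 * card S - 1"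
    by (simp add: card_Diff_singleton card_cartesian_product)
  moreover have "CARD('a) \<le> card ((S \<times> (UNIV :: bool set)) - {(0, False)})"
    using card_inj_on_le[OF _ Fsub] injF by simp
  moreover have "0 < card S" using \<open>0 \<in> S\<close> by (auto simp: card_gt_0_iff)
  ultimately have cS: "CARD('a) + 1 \<le> 2 * card S" by linarith
  define A where "A = (\<lambda>s. a * s) ` S"
  define B where "B = (\<lambda>s. c - b * s) ` S"
  have cA: "card A = card S" unfolding A_def using assms by (intro card_image) (simp add: inj_on_def)
  have cB: "card B = card S" unfolding B_def using assms by (intro card_image) (simp add: inj_on_def)
  have "A \<inter> B \<noteq> {}"
  proof
    assume "A \<inter> B = {}"
    then have "card (A \<union> B) = 2 * card S" using cA cB by (simp add: card_Un_disjoint)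
    moreover have "card (A \<union> B) \<le> CARD('a)" by (rule card_mono) auto
    ultimately show False using cS by simp
  qed
  then obtain z where "z \<in> A" "z \<in> B" by blast
  then obtain x y where "z = a * x^2" "z = c - b * y^2" unfolding A_def B_def S_def by blast
  then have "a * x^2 + b * y^2 = c" by (simp add: algebra_simps)
  then show ?thesis by blast
qed

lemma sq_surj2:
  fixes c :: "'a::{field,finite}"
  assumes "(2::'a) = 0"
  shows "\<exists>x. x^2 = c"
proof -
  have "inj (\<lambda>x::'a. x^2)"
  proof (rule injI)
    fix x y :: 'a assume "x^2 = y^2"
    have "(x + y)^2 = x^2 + y^2 + 2 * x * y" by (simp add: power2_eq_square algebra_simps)
    also have "\<dots> = 2 * y^2" using assms \<open>x^2 = y^2\<close> by simp
    also have "\<dots> = 0" using assms by simp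
    finally have "x + y = 0" by simp
    moreover have "y + y = 0" using assms by (metis mult_2 mult_zero_left)
    ultimately show "x = y" by (metis add_right_imp_eq)
  qed
  then have "surj (\<lambda>x::'a. x^2)" by (intro finite_UNIV_inj_surj) simp_all
  then show ?thesis by (metis surjD)
qed

lemma sp_mem: "a *s x + b *s y \<in> sp x y" unfolding sp_def by blast
lemma sp_x: "x \<in> sp x y" using sp_mem[of 1 x 0 y] by simp
lemma sp_y: "y \<in> sp x y" using sp_mem[of 0 x 1 y] by simp
lemma sp_0: "0 \<in> sp x y" using sp_mem[of 0 x 0 y] by simp
lemma sp_E: assumes "z \<in> sp x y" obtains a b where "z = a *s x + b *s y"
  using assms unfolding sp_def by blast
lemma sp_smult: assumes "z \<in> sp x y" shows "c *s z \<in> sp x y"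
proof -
  obtain a b where "z = a *s x + b *s y" using assms sp_E by blast
  then have "c *s z = (c * a) *s x + (c * b) *s y" by (simp add: vec_eq_iff algebra_simps)
  then show ?thesis using sp_mem by metis
qed
lemma sp_add: assumes "z \<in> sp x y" "z' \<in> sp x y" shows "z + z' \<in> sp x y"
proof -
  obtain a b where 1: "z = a *s x + b *s y" using assms sp_E by blast
  obtain a' b' where 2: "z' = a' *s x + b' *s y" using assms sp_E by blast
  have "z + z' = (a + a') *s x + (b + b') *s y" unfolding 1 2 by (simp add: vec_eq_iff algebra_simps)
  then show ?thesis using sp_mem by metis
qed

lemma two_spaceE: assumes "two_space W" obtains p q where "indep p q" "W = sp p q"
  using assms unfolding two_space_sp by blast

lemma indep_nz: "indep p q \<Longrightarrow> p \<noteq> 0"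
  unfolding indep_def using vector_smult_lid vector_smult_lzero by (metis add.right_neutral one_neq_zero)

lemma semi_basic:
  assumes "semilinear_with s h"
  shows "h 0 = 0" "inj h" "h (a *s x + b *s y) = s a *s h x + s b *s h y" "field_aut s"
    "h (c *s x) = s c *s h x"
proof -
  have fa: "field_aut s" and bh: "bij h" and add: "\<And>u v. h (u + v) = h u + h v"
    and sm: "\<And>c v. h (c *s v) = s c *s h v" using assms unfolding semilinear_with_def by blast+
  show "field_aut s" by (rule fa)
  show "h 0 = 0" using sm[of 0 0] field_aut_basic(1)[OF fa] by simp
  show "inj h" using bh bij_def by blast
  show "h (a *s x + b *s y) = s a *s h x + s b *s h y" using add sm by simp
  show "h (c *s x) = s c *s h x" by (rule sm)
qed

lemma semi_sp:
  assumes "semilinear_with s h"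
  shows "h ` sp x y = sp (h x) (h y)"
proof
  show "h ` sp x y \<subseteq> sp (h x) (h y)"
  proof
    fix z assume "z \<in> h ` sp x y"
    then obtain a b where "z = h (a *s x + b *s y)" using sp_E by blast
    then show "z \<in> sp (h x) (h y)" using semi_basic(3)[OF assms] sp_mem by metis
  qed
  show "sp (h x) (h y) \<subseteq> h ` sp x y"
  proof
    fix z assume "z \<in> sp (h x) (h y)"
    then obtain a' b' where z: "z = a' *s h x + b' *s h y" using sp_E by blast
    have "surj s" using field_aut_basic(5)[OF semi_basic(4)[OF assms]] .
    then obtain a b where "a' = s a" "b' = s b" by (metis surjD)
    then have "z = h (a *s x + b *s y)" using z semi_basic(3)[OF assms] by simp
    then show "z \<in> h ` sp x y" using sp_mem by blast
  qed
qed

lemma semi_indep: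
  assumes "semilinear_with s h" "indep x y"
  shows "indep (h x) (h y)"
  unfolding indep_def
proof (intro allI impI)
  fix a' b' assume z: "a' *s h x + b' *s h y = 0"
  have fa: "field_aut s" using semi_basic(4)[OF assms(1)] .
  have "surj s" using field_aut_basic(5)[OF fa] .
  then obtain a b where ab: "a' = s a" "b' = s b" by (metis surjD)
  then have "h (a *s x + b *s y) = h 0" using z semi_basic(1,3)[OF assms(1)] by simp
  then have "a *s x + b *s y = 0" using semi_basic(2)[OF assms(1)] injD by metis
  then have "a = 0 \<and> b = 0" using assms(2) unfolding indep_def by blast
  then show "a' = 0 \<and> b' = 0" using ab field_aut_basic(1)[OF fa] by simp
qed

lemma semi_two_space:
  assumes "semilinear_with s h" "two_space W"
  shows "two_space (h ` W)"
proof -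
  obtain p q where "indep p q" "W = sp p q" using assms(2) two_spaceE by blast
  then show ?thesis unfolding two_space_sp using semi_sp[OF assms(1)] semi_indep[OF assms(1)] by blast
qed

context
  fixes \<beta> :: "'a::field^'n \<Rightarrow> 'a^'n \<Rightarrow> 'a"
  assumes lin: "left_linear \<beta>"
    and brefl: "\<And>x y. \<beta> x y = 0 \<longleftrightarrow> \<beta> y x = 0"
begin
lemma b_add: "\<beta> (x + y) z = \<beta> x z + \<beta> y z" using lin unfolding left_linear_def by blast
lemma b_smult: "\<beta> (c *s x) z = c * \<beta> x z" using lin unfolding left_linear_def by blast
lemma b_zero: "\<beta> 0 z = 0" using b_smult[of 0 z z] by simp
lemma b_zero2: "\<beta> z 0 = 0" using brefl[of z 0] b_zero[of z] by simp
lemma b_comb: "\<beta> (a *s x + b *s y) z = a * \<beta> x z + b * \<beta> y z"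
  by (simp only: b_add b_smult)
lemma b_neg: "\<beta> (- x) z = - \<beta> x z"
  using b_add[of x "- x" z] b_zero[of z] by (simp add: add_eq_0_iff)
lemma b_diff: "\<beta> (x - y) z = \<beta> x z - \<beta> y z"
  using b_add[of x "- y" z] b_neg[of y z] by simp

lemma b_scale_eq: "\<beta> (c *s x + d *s y) z = c * \<beta> x z + d * \<beta> y z" by (rule b_comb)

lemma hyp2:
  assumes "\<beta> x x = 0" "\<beta> y x \<noteq> 0"
  shows "indep x y" "nondeg_subspace \<beta> (sp x y)"
proof -
  have yx: "\<beta> x y \<noteq> 0" using assms(2) brefl[of x y] by simp
  have key: "a = 0 \<and> b = 0" if "\<beta> (a *s x + b *s y) x = 0" "\<beta> (a *s x + b *s y) y = 0" for a b
  proof -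
    from that(1) have "b * \<beta> y x = 0" by (simp add: b_comb assms)
    then have b: "b = 0" using assms by simp
    from that(2) b have "a * \<beta> x y = 0" by (simp add: b_comb b_smult)
    then show ?thesis using b yx by simp
  qed
  show "indep x y" unfolding indep_def
  proof (intro allI impI)
    fix a b assume "a *s x + b *s y = 0"
    then show "a = 0 \<and> b = 0" using key[of a b] b_zero[of x] b_zero[of y] by simp
  qed
  show "nondeg_subspace \<beta> (sp x y)" unfolding nondeg_subspace_def
  proof
    show "sp x y \<inter> perp \<beta> (sp x y) \<subseteq> {0}"
    proof
      fix z assume z: "z \<in> sp x y \<inter> perp \<beta> (sp x y)"
      then obtain a b where zd: "z = a *s x + b *s y" unfolding sp_def by blast
      have "x = 1 *s x + 0 *s y" by simp
      then have "x \<in> sp x y" unfolding sp_def by blast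
      moreover have "y = 0 *s x + 1 *s y" by simp
      then have "y \<in> sp x y" unfolding sp_def by blast
      ultimately have "\<beta> x z = 0" "\<beta> y z = 0" using z unfolding perp_def by blast+
      then have "\<beta> z x = 0" "\<beta> z y = 0" using brefl[of x z] brefl[of y z] by simp_all
      then have "a = 0 \<and> b = 0" using key[of a b] zd by simp
      then show "z \<in> {0}" using zd by simp
    qed
    have "(0::'a^'n) = 0 *s x + 0 *s y" by simp
    then have "0 \<in> sp x y" unfolding sp_def by blast
    moreover have "0 \<in> perp \<beta> (sp x y)" unfolding perp_def using b_zero2 by blast
    ultimately show "{0} \<subseteq> sp x y \<inter> perp \<beta> (sp x y)" by blast
  qed
qed
lemma disj_uw:
  assumes "nondeg_subspace \<beta> u" "\<forall>p\<in>u. \<forall>q\<in>w. \<beta> p q = 0" "x \<in> u" "x \<in> w"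
  shows "x = 0"
proof -
  have "x \<in> perp \<beta> u" unfolding perp_def using assms by blast
  then show ?thesis using assms(1,3) unfolding nondeg_subspace_def by blast
qed

lemma no_path2:
  assumes u: "two_space u" "nondeg_subspace \<beta> u" and w: "two_space w"
    and z: "two_space z" "nondeg_subspace \<beta> z"
    and uw: "\<forall>p\<in>u. \<forall>q\<in>w. \<beta> p q = 0"
    and a: "a \<noteq> 0" "\<beta> a a = 0" "a \<in> u" "a \<in> z" and b: "b \<noteq> 0" "b \<in> w" "b \<in> z"
  shows False
proof -
  obtain pu qu where upq: "u = sp pu qu" using u(1) two_spaceE by metis
  obtain pw qw where wpq: "w = sp pw qw" using w(1) two_spaceE by metis
  obtain p q where pq: "indep p q" "z = sp p q" using z(1) two_spaceE by metis
  have ba: "\<beta> b a = 0" using uw a(3) b(2) brefl by blast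
  have indab: "c = 0 \<and> d = 0" if "c *s a + d *s b = 0" for c d
  proof -
    have "c *s a = (- d) *s b" using that by (simp add: vec_eq_iff algebra_simps eq_neg_iff_add_eq_0)
    moreover have "c *s a \<in> u" using a(3) upq sp_smult by metis
    moreover have "(- d) *s b \<in> w" using b(2) wpq sp_smult by metis
    ultimately have "c *s a = 0" using disj_uw[OF u(2) uw] by metis
    then have c: "c = 0" using a(1) by simp
    then have "d *s b = 0" using that by simp
    then show ?thesis using c b(1) by simp
  qed
  obtain a1 a2 where ad: "a = a1 *s p + a2 *s q" using a(4) pq(2) sp_E by metis
  obtain b1 b2 where bd: "b = b1 *s p + b2 *s q" using b(3) pq(2) sp_E by metis
  define D where "D = a1 * b2 - a2 * b1"
  have Dp: "D *s p = b2 *s a + (- a2) *s b" unfolding ad bd D_def by (simp add: vec_eq_iff algebra_simps)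
  have Dq: "D *s q = (- b1) *s a + a1 *s b" unfolding ad bd D_def by (simp add: vec_eq_iff algebra_simps)
  have "D \<noteq> 0"
  proof
    assume D0: "D = 0"
    have "b2 *s a + (- a2) *s b = 0" using Dp D0 by (metis vector_smult_lzero)
    then have "b2 = 0 \<and> - a2 = 0" by (rule indab)
    moreover have "(- b1) *s a + a1 *s b = 0" using Dq D0 by (metis vector_smult_lzero)
    then have "- b1 = 0 \<and> a1 = 0" by (rule indab)
    ultimately have "a = 0" unfolding ad by simp
    then show False using a(1) by simp
  qed
  have "D * \<beta> p a = 0"
    using Dp b_smult[of D p a] b_comb[of b2 a "- a2" b a] a(2) ba by simp
  then have pa: "\<beta> p a = 0" using \<open>D \<noteq> 0\<close> by simp
  have "D * \<beta> q a = 0"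
    using Dq b_smult[of D q a] b_comb[of "- b1" a a1 b a] a(2) ba by simp
  then have qa: "\<beta> q a = 0" using \<open>D \<noteq> 0\<close> by simp
  have "a \<in> perp \<beta> z"
    unfolding perp_def
  proof (rule CollectI, rule ballI)
    fix y assume "y \<in> z"
    then obtain c d where "y = c *s p + d *s q" using pq(2) sp_E by metis
    then show "\<beta> y a = 0" using b_comb[of c p d q a] pa qa by simp
  qed
  then have "a = 0" using z(2) a(4) unfolding nondeg_subspace_def by blast
  then show False using a(1) by simp
qed


lemma semi_nondeg:
  assumes "semilinear_with s h" "l \<noteq> 0" "\<forall>x y. \<beta> (h x) (h y) = l * s (\<beta> x y)"
    and "nondeg_subspace \<beta> W" "0 \<in> W"
  shows "nondeg_subspace \<beta> (h ` W)"
  unfolding nondeg_subspace_def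
proof
  have fa: "field_aut s" using semi_basic(4)[OF assms(1)] .
  show "h ` W \<inter> perp \<beta> (h ` W) \<subseteq> {0}"
  proof
    fix y assume y: "y \<in> h ` W \<inter> perp \<beta> (h ` W)"
    then obtain x where x: "x \<in> W" "y = h x" by blast
    have "\<beta> w x = 0" if "w \<in> W" for w
    proof -
      have "\<forall>w'\<in>h ` W. \<beta> w' y = 0" using y unfolding perp_def by blast
      moreover have "h w \<in> h ` W" using that by blast
      ultimately have "\<beta> (h w) (h x) = 0" using x(2) by blast
      then have "s (\<beta> w x) = 0" using assms(2,3) by simp
      then show ?thesis using field_aut_basic(2)[OF fa] by blast
    qed
    then have "x \<in> W \<inter> perp \<beta> W" unfolding perp_def using x by blast
    then have "x = 0" using assms(4) unfolding nondeg_subspace_def by blast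
    then show "y \<in> {0}" using x semi_basic(1)[OF assms(1)] by simp
  qed
  have "0 \<in> h ` W" using assms(5) semi_basic(1)[OF assms(1)] by force
  moreover have "0 \<in> perp \<beta> (h ` W)" unfolding perp_def using b_zero2 by blast
  ultimately show "{0} \<subseteq> h ` W \<inter> perp \<beta> (h ` W)" by blast
qed

lemma enat_3_le_gdist:
  assumes "\<And>k. walk E k u w \<Longrightarrow> 3 \<le> k"
  shows "3 \<le> gdist E u w"
  unfolding gdist_def
proof (rule INF_greatest)
  fix k assume "k \<in> {k. walk E k u w}"
  then have "3 \<le> k" using assms by blast
  then show "3 \<le> enat k" by (simp add: numeral_eq_enat)
qed

lemma gen_main:
  fixes iso S :: "'a^'n \<Rightarrow> bool" and X :: "('a^'n) set set" and H :: "('a^'n \<Rightarrow> 'a^'n) set"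
  assumes X_def: "X = {W. two_space W \<and> nondeg_subspace \<beta> W \<and> (\<exists>v\<in>W. v \<noteq> 0 \<and> S v)}"
    and iso_zero: "\<And>x. iso x \<Longrightarrow> \<beta> x x = 0" and iso_S: "\<And>x. iso x \<Longrightarrow> S x"
    and Hs: "\<And>h. h \<in> H \<Longrightarrow> \<exists>s l. semilinear_with s h \<and> l \<noteq> 0 \<and> (\<forall>x y. \<beta> (h x) (h y) = l * s (\<beta> x y))
               \<and> (\<forall>x. iso x \<longrightarrow> iso (h x)) \<and> (\<forall>x. S x \<longrightarrow> S (h x))"
    and nd: "nondeg_form \<beta>"
    and e: "e \<noteq> 0" "iso e" "\<beta> f e = 1" and e': "e' \<noteq> 0" "iso e'" "\<beta> e' e = 0" "\<beta> e' f = 0"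
  shows "3 \<le> diam X (induced_perm X ` H)"
proof -
  define G where "G = induced_perm X ` H"
  have ee: "\<beta> e e = 0" using iso_zero e(2) .
  have ef: "\<beta> e f \<noteq> 0" using e(3) brefl[of e f] by auto
  have ee': "\<beta> e e' = 0" using e'(3) brefl by blast
  have fe': "\<beta> f e' = 0" using e'(4) brefl by blast
  have e'e': "\<beta> e' e' = 0" using iso_zero e'(2) .
  have inX: "W \<in> X" if "two_space W" "nondeg_subspace \<beta> W" "v \<in> W" "v \<noteq> 0" "iso v" for W v
    unfolding X_def using that iso_S by blast
  have hX: "h ` W \<in> X" if h: "h \<in> H" and W: "W \<in> X" for h W
  proof -
    obtain s l where sl: "semilinear_with s h" "l \<noteq> 0" "\<forall>x y. \<beta> (h x) (h y) = l * s (\<beta> x y)"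
      "\<forall>x. S x \<longrightarrow> S (h x)" using Hs[OF h] by blast
    have W2: "two_space W" "nondeg_subspace \<beta> W" and Wv: "\<exists>v\<in>W. v \<noteq> 0 \<and> S v" using W unfolding X_def by blast+
    have "0 \<in> W" using W2(1) two_spaceE sp_0 by metis
    then have "nondeg_subspace \<beta> (h ` W)" using semi_nondeg[OF sl(1-3) W2(2)] by blast
    moreover have "two_space (h ` W)" using semi_two_space[OF sl(1) W2(1)] .
    moreover have "\<exists>v\<in>h ` W. v \<noteq> 0 \<and> S v"
    proof -
      obtain v where v: "v \<in> W" "v \<noteq> 0" "S v" using Wv by blast
      have "h v \<noteq> 0" using v(2) semi_basic(1,2)[OF sl(1)] injD by metis
      then show ?thesis using v sl(4) by blast
    qed
    ultimately show ?thesis unfolding X_def by blast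
  qed
  define u0 where "u0 = sp e f"
  define v0 where "v0 = sp e (f + e')"
  have u0nd: "indep e f" "nondeg_subspace \<beta> u0" using hyp2[OF ee] e(3) unfolding u0_def by auto
  have "\<beta> (f + e') e = 1" using b_add e(3) e'(3) by simp
  then have v0nd: "indep e (f + e')" "nondeg_subspace \<beta> v0" using hyp2[OF ee] unfolding v0_def by auto
  have u0X: "u0 \<in> X" using inX[of u0 e] u0nd e sp_x unfolding u0_def two_space_sp by blast
  have v0X: "v0 \<in> X" using inX[of v0 e] v0nd e sp_x unfolding v0_def two_space_sp by blast
  have perp_e': "\<beta> p e' = 0" if pu: "p \<in> u0" for p
  proof -
    obtain a b where "p = a *s e + b *s f" using pu sp_E unfolding u0_def by blast
    then show ?thesis using b_comb[of a e b f e'] ee' fe' by simp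
  qed
  have uv: "u0 \<noteq> v0"
  proof
    assume eq: "u0 = v0"
    have "f + e' \<in> u0" using eq sp_y unfolding v0_def by metis
    moreover have "(-1) *s f \<in> u0" using sp_y sp_smult unfolding u0_def by metis
    ultimately have "(f + e') + (-1) *s f \<in> u0" using sp_add unfolding u0_def by metis
    moreover have "(f + e') + (-1) *s f = e'" by (simp add: vec_eq_iff)
    ultimately have "e' \<in> u0" by simp
    moreover have "e' \<in> perp \<beta> u0" unfolding perp_def using perp_e' by blast
    ultimately have "e' = 0" using u0nd(2) unfolding nondeg_subspace_def by blast
    then show False using e'(1) by simp
  qed
  obtain v where v: "\<beta> e' v \<noteq> 0" using nd e'(1) unfolding nondeg_form_def by blast
  have ve': "\<beta> v e' \<noteq> 0" using v brefl by blast
  define yc where "yc = \<beta> v e"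
  define xc where "xc = (\<beta> v f - yc * \<beta> f f) / \<beta> e f"
  define v' where "v' = v + ((- xc) *s e + (- yc) *s f)"
  have bv': "\<beta> v' z = \<beta> v z - xc * \<beta> e z - yc * \<beta> f z" for z
    unfolding v'_def using b_add[of v] b_comb[of "- xc" e "- yc" f z] by simp
  have v'e: "\<beta> v' e = 0" using bv'[of e] ee e(3) unfolding yc_def by simp
  have v'f: "\<beta> v' f = 0" using bv'[of f] ef unfolding xc_def by (simp add: field_simps)
  have v'e': "\<beta> v' e' \<noteq> 0" using bv'[of e'] ee' fe' ve' by simp
  define w where "w = sp e' v'"
  have wnd: "indep e' v'" "nondeg_subspace \<beta> w" using hyp2[OF e'e' v'e'] unfolding w_def by auto
  have wX: "w \<in> X" using inX[of w e'] wnd e' sp_x unfolding w_def two_space_sp by blast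
  have uw: "\<forall>p\<in>u0. \<forall>q\<in>w. \<beta> p q = 0"
  proof (intro ballI)
    fix p q assume p: "p \<in> u0" and q: "q \<in> w"
    obtain a b where pd: "p = a *s e + b *s f" using p sp_E unfolding u0_def by blast
    obtain c d where qd: "q = c *s e' + d *s v'" using q sp_E unfolding w_def by blast
    have "\<beta> p e' = 0" using perp_e' p .
    then have 1: "\<beta> e' p = 0" using brefl by blast
    have "\<beta> e v' = 0" "\<beta> f v' = 0" using v'e v'f brefl by blast+
    then have "\<beta> p v' = 0" using pd b_comb[of a e b f v'] by simp
    then have 2: "\<beta> v' p = 0" using brefl by blast
    have "\<beta> q p = 0" using qd b_comb[of c e' d v' p] 1 2 by simp
    then show "\<beta> p q = 0" using brefl by blast
  qed
  define E0 where "E0 = (\<lambda>g. g ` {u0, v0}) ` G"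
  have c2: "{u0, v0} \<subseteq> X" "card {u0, v0} = 2" using u0X v0X uv by auto
  have E0u: "E0 \<in> uorbitals X G" unfolding uorbitals_def E0_def using c2 by blast
  define Rel where "Rel a b \<longleftrightarrow> a \<in> X \<and> b \<in> X \<and> (\<exists>x. x \<noteq> 0 \<and> iso x \<and> x \<in> a \<and> x \<in> b)" for a b
  have edge: "Rel a b" if abE: "{a, b} \<in> E0" for a b
  proof -
    obtain h where h: "h \<in> H" "{a, b} = induced_perm X h ` {u0, v0}" using abE unfolding E0_def G_def by blast
    then have ab: "{a, b} = {h ` u0, h ` v0}" unfolding induced_perm_def using u0X v0X by simp
    obtain s where sl: "semilinear_with s h" "\<forall>x. iso x \<longrightarrow> iso (h x)" using Hs[OF h(1)] by blast
    have "h e \<noteq> 0" using e(1) semi_basic(1,2)[OF sl(1)] injD by metis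
    moreover have "iso (h e)" using sl(2) e(2) by blast
    moreover have "h e \<in> h ` u0" using sp_x[of e f] unfolding u0_def by (rule imageI)
    moreover have "h e \<in> h ` v0" using sp_x[of e "f + e'"] unfolding v0_def by (rule imageI)
    moreover have "h ` u0 \<in> X" "h ` v0 \<in> X" using hX h(1) u0X v0X by blast+
    ultimately have r: "Rel (h ` u0) (h ` v0)" "Rel (h ` v0) (h ` u0)" unfolding Rel_def by blast+
    have "(a = h ` u0 \<and> b = h ` v0) \<or> (a = h ` v0 \<and> b = h ` u0)" using ab by (simp add: doubleton_eq_iff)
    then show ?thesis using r by blast
  qed
  have u0two: "two_space u0" using u0nd unfolding u0_def two_space_sp by blast
  have wtwo: "two_space w" using wnd unfolding w_def two_space_sp by blast
  have dist: "3 \<le> k" if wk: "walk E0 k u0 w" for k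
  proof (rule ccontr)
    assume "\<not> 3 \<le> k"
    then have k: "k = 0 \<or> k = 1 \<or> k = 2" by linarith
    obtain p where p: "p 0 = u0" "p k = w" "\<forall>i<k. {p i, p (Suc i)} \<in> E0" using wk unfolding walk_def by blast
    have eu: "e \<in> u0" using sp_x unfolding u0_def by blast
    show False
    proof (cases "k = 0")
      case True
      then have "e \<in> w" using p(1,2) eu by simp
      then show ?thesis using disj_uw[OF u0nd(2) uw eu] e(1) by simp
    next
      case k0: False
      show ?thesis
      proof (cases "k = 1")
        case True
        then have "{p 0, p 1} \<in> E0" using p(3) True by simp
        then have "Rel u0 w" using p(1,2) \<open>k = 1\<close> edge[of u0 w] by simp
        then obtain x where "x \<noteq> 0" "x \<in> u0" "x \<in> w" unfolding Rel_def by blast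
        then show ?thesis using disj_uw[OF u0nd(2) uw] by blast
      next
        case False
        then have k2: "k = 2" using k k0 by simp
        have p3: "\<forall>i<2. {p i, p (Suc i)} \<in> E0" using p(3) k2 by blast
        have "{p 0, p 1} \<in> E0" using spec[OF p3, of 0] by simp
        then have "Rel u0 (p 1)" using p(1) edge by metis
        moreover have "{p 1, p 2} \<in> E0" using spec[OF p3, of 1] by (simp add: numeral_2_eq_2)
        then have "Rel (p 1) w" using p(2) k2 edge by metis
        ultimately obtain x y where x: "x \<noteq> 0" "iso x" "x \<in> u0" "x \<in> p 1"
          and y: "y \<noteq> 0" "y \<in> p 1" "y \<in> w" and z: "p 1 \<in> X" unfolding Rel_def by blast
        have zz: "two_space (p 1)" "nondeg_subspace \<beta> (p 1)" using z unfolding X_def by blast+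
        show ?thesis using no_path2[OF u0two u0nd(2) wtwo zz uw x(1) iso_zero[OF x(2)] x(3,4) y(1) y(3) y(2)] .
      qed
    qed
  qed
  have "3 \<le> gdist E0 u0 w" using dist by (rule enat_3_le_gdist)
  also have "gdist E0 u0 w \<le> graph_diam X E0"
    unfolding graph_diam_def using u0X wX by (meson SUP_upper2 order_refl)
  also have "graph_diam X E0 \<le> diam X G" unfolding diam_def using E0u by (rule SUP_upper)
  finally show ?thesis unfolding G_def .
qed

end

context
  fixes \<beta> :: "'a::{field,finite}^'n::finite \<Rightarrow> 'a^'n \<Rightarrow> 'a"
  assumes lin: "left_linear \<beta>"
    and brefl: "\<And>x y. \<beta> x y = 0 \<longleftrightarrow> \<beta> y x = 0"
begin

lemmas c_add = b_add[OF lin brefl]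
lemmas c_smult = b_smult[OF lin brefl]
lemmas c_zero = b_zero[OF lin brefl]
lemmas c_comb = b_comb[OF lin brefl]
lemmas c_diff = b_diff[OF lin brefl]
lemmas c_zero2 = b_zero2[OF lin brefl]

lemma kcount:
  "CARD('a) ^ CARD('n) \<le> CARD('a) ^ (length \<Phi>) * card {v. \<forall>\<phi>\<in>set \<Phi>. \<beta> v \<phi> = 0}"
proof -
  define Kp where "Kp = {v. \<forall>\<phi>\<in>set \<Phi>. \<beta> v \<phi> = 0}"
  define L where "L v = map (\<lambda>\<phi>. \<beta> v \<phi>) \<Phi>" for v
  define r where "r c = (SOME v. L v = c)" for c
  define F where "F v = (L v, v - r (L v))" for v
  have rL: "L (r (L v)) = L v" for v unfolding r_def by (rule someI[of "\<lambda>w. L w = L v" v]) simp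
  have LK: "v - w \<in> Kp" if "L v = L w" for v w
  proof -
    have "\<forall>\<phi>\<in>set \<Phi>. \<beta> v \<phi> = \<beta> w \<phi>" using that unfolding L_def by (simp add: map_eq_conv)
    then show ?thesis unfolding Kp_def by (simp add: c_diff)
  qed
  have "inj F"
  proof (rule injI)
    fix v w assume "F v = F w"
    then have "L v = L w" "v - r (L v) = w - r (L w)" unfolding F_def by (metis prod.inject)+
    then show "v = w" by simp
  qed
  moreover have "F ` UNIV \<subseteq> {xs. set xs \<subseteq> UNIV \<and> length xs = length \<Phi>} \<times> Kp"
  proof
    fix z assume "z \<in> F ` UNIV"
    then obtain v where z: "z = F v" by blast
    have "length (L v) = length \<Phi>" unfolding L_def by simp
    moreover have "v - r (L v) \<in> Kp" using LK[of v "r (L v)"] rL[of v] by simp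
    ultimately show "z \<in> {xs. set xs \<subseteq> UNIV \<and> length xs = length \<Phi>} \<times> Kp" unfolding z F_def by simp
  qed
  moreover have "finite ({xs. set xs \<subseteq> (UNIV :: 'a set) \<and> length xs = length \<Phi>} \<times> Kp)"
    using finite_lists_length_eq[of "UNIV :: 'a set"] by simp
  ultimately have "card (UNIV :: ('a^'n) set) \<le> card ({xs. set xs \<subseteq> (UNIV :: 'a set) \<and> length xs = length \<Phi>} \<times> Kp)"
    using card_inj_on_le[of F UNIV] by (simp add: inj_on_def inj_def)
  moreover have "card {xs. set xs \<subseteq> (UNIV :: 'a set) \<and> length xs = length \<Phi>} = CARD('a) ^ length \<Phi>"
    by (rule card_lists_length_eq) simp
  ultimately show ?thesis unfolding Kp_def by (simp only: card_cartesian_product CARD_vec)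
qed

lemma card_ge2: "2 \<le> CARD('a)"
proof -
  have "card {0::'a, 1} \<le> CARD('a)" by (rule card_mono) auto
  then show ?thesis by simp
qed

lemma K_big:
  assumes "length \<Phi> + m \<le> CARD('n)"
  shows "CARD('a) ^ m \<le> card {v. \<forall>\<phi>\<in>set \<Phi>. \<beta> v \<phi> = 0}"
proof -
  define q where "q = CARD('a)"
  have q0: "0 < q" unfolding q_def by simp
  have "q ^ (length \<Phi>) * q ^ m = q ^ (length \<Phi> + m)" by (simp add: power_add)
  also have "\<dots> \<le> q ^ CARD('n)" using assms q0 card_ge2 unfolding q_def by (intro power_increasing) auto
  also have "\<dots> \<le> q ^ (length \<Phi>) * card {v. \<forall>\<phi>\<in>set \<Phi>. \<beta> v \<phi> = 0}" using kcount unfolding q_def .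
  finally show ?thesis using q0 unfolding q_def by simp
qed

lemma K_avoid:
  assumes "length \<Phi> + m \<le> CARD('n)" "card A < CARD('a) ^ m"
  shows "\<exists>v. (\<forall>\<phi>\<in>set \<Phi>. \<beta> v \<phi> = 0) \<and> v \<notin> A"
proof (rule ccontr)
  assume "\<not> ?thesis"
  then have "{v. \<forall>\<phi>\<in>set \<Phi>. \<beta> v \<phi> = 0} \<subseteq> A" by blast
  then have "card {v. \<forall>\<phi>\<in>set \<Phi>. \<beta> v \<phi> = 0} \<le> card A" by (intro card_mono) auto
  then show False using K_big[OF assms(1)] assms(2) by simp
qed

lemma K_nonzero:
  assumes "length \<Phi> + 1 \<le> CARD('n)"
  shows "\<exists>v. v \<noteq> 0 \<and> (\<forall>\<phi>\<in>set \<Phi>. \<beta> v \<phi> = 0)"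
  using K_avoid[OF assms, of "{0}"] card_ge2 by auto

lemma K_line:
  assumes "length \<Phi> + 2 \<le> CARD('n)"
  shows "\<exists>v. (\<forall>\<phi>\<in>set \<Phi>. \<beta> v \<phi> = 0) \<and> v \<notin> range (\<lambda>c. c *s x)"
proof -
  have "card (range (\<lambda>c. c *s x)) \<le> CARD('a)" by (rule card_image_le) simp
  also have "\<dots> < CARD('a) ^ 2" using card_ge2 by (simp add: power2_eq_square)
  finally show ?thesis using K_avoid[OF assms] by blast
qed

lemma get_f:
  assumes "nondeg_form \<beta>" "e \<noteq> 0"
  shows "\<exists>f. \<beta> f e = 1"
proof -
  obtain v where "\<beta> e v \<noteq> 0" using assms unfolding nondeg_form_def by blast
  then have v: "\<beta> v e \<noteq> 0" using brefl by blast
  have "\<beta> ((1 / \<beta> v e) *s v) e = (1 / \<beta> v e) * \<beta> v e" by (rule c_smult)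
  then have "\<beta> ((1 / \<beta> v e) *s v) e = 1" using v by simp
  then show ?thesis by blast
qed

lemma proj:
  assumes "\<beta> e e = 0" "\<beta> f e = 1"
  shows "\<exists>v'. \<beta> v' e = 0 \<and> \<beta> v' f = 0 \<and> (\<forall>z. \<beta> z e = 0 \<longrightarrow> \<beta> z f = 0 \<longrightarrow> \<beta> v' z = \<beta> v z)"
proof -
  have ef: "\<beta> e f \<noteq> 0" using assms(2) brefl[of e f] by auto
  define yc where "yc = \<beta> v e"
  define xc where "xc = (\<beta> v f - yc * \<beta> f f) / \<beta> e f"
  define v' where "v' = v + ((- xc) *s e + (- yc) *s f)"
  have bv': "\<beta> v' z = \<beta> v z - xc * \<beta> e z - yc * \<beta> f z" for z
    unfolding v'_def using c_add[of v] c_comb[of "- xc" e "- yc" f z] by simp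
  have "\<beta> v' e = 0" using bv'[of e] assms unfolding yc_def by simp
  moreover have "\<beta> v' f = 0" using bv'[of f] ef unfolding xc_def by (simp add: field_simps)
  moreover have "\<beta> v' z = \<beta> v z" if "\<beta> z e = 0" "\<beta> z f = 0" for z
  proof -
    have "\<beta> e z = 0" "\<beta> f z = 0" using that brefl by blast+
    then show ?thesis using bv'[of z] by simp
  qed
  ultimately show ?thesis by blast
qed

lemma K_comb:
  assumes "\<forall>\<phi>\<in>set \<Phi>. \<beta> y \<phi> = 0" "\<forall>\<phi>\<in>set \<Phi>. \<beta> z \<phi> = 0"
  shows "\<forall>\<phi>\<in>set \<Phi>. \<beta> (a *s y + b *s z) \<phi> = 0"
  using assms by (simp add: c_comb)

lemma herm_stepA:
  assumes fa: "field_aut t" and inv: "\<And>x. t (t x) = x" and nt: "\<exists>x. t x \<noteq> x"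
    and hs: "\<And>x y. \<beta> y x = t (\<beta> x y)"
    and len: "length \<Psi> + 1 \<le> CARD('n)"
    and ndP: "\<And>y. \<forall>\<phi>\<in>set \<Psi>. \<beta> y \<phi> = 0 \<Longrightarrow> y \<noteq> 0 \<Longrightarrow> \<exists>v. (\<forall>\<phi>\<in>set \<Psi>. \<beta> v \<phi> = 0) \<and> \<beta> v y \<noteq> 0"
  shows "\<exists>x. (\<forall>\<phi>\<in>set \<Psi>. \<beta> x \<phi> = 0) \<and> \<beta> x x \<noteq> 0"
proof (rule ccontr)
  assume na: "\<not> ?thesis"
  note tp = field_aut_props[OF fa]
  obtain y where y: "y \<noteq> 0" "\<forall>\<phi>\<in>set \<Psi>. \<beta> y \<phi> = 0" using K_nonzero[OF len] by blast
  obtain z where z: "\<forall>\<phi>\<in>set \<Psi>. \<beta> z \<phi> = 0" "\<beta> z y \<noteq> 0" using ndP[OF y(2) y(1)] by blast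
  define c where "c = \<beta> z y"
  have yy: "\<beta> y y = 0" and zz: "\<beta> z z = 0" using na y z by blast+
  have "\<exists>m. m + t m \<noteq> 0"
  proof (rule ccontr)
    assume "\<not> (\<exists>m. m + t m \<noteq> 0)"
    then have all: "\<And>m. m + t m = 0" by blast
    have two: "(1::'a) + 1 = 0" using all[of 1] tp(2) by simp
    have "t m = m" for m
    proof -
      have "t m = - m" using all[of m] by (simp add: add_eq_0_iff)
      moreover have "m + m = 0" using two by (metis distrib_left mult.right_neutral mult_zero_right)
      ultimately show ?thesis by (simp add: add_eq_0_iff)
    qed
    then show False using nt by blast
  qed
  then obtain m where m: "m + t m \<noteq> 0" by blast
  define l where "l = m / c"
  have c0: "c \<noteq> 0" using z(2) unfolding c_def .
  define w where "w = 1 *s y + l *s z"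
  have yz: "\<beta> y z = t c" using hs[where x=z and y=y] unfolding c_def .
  have wy: "\<beta> w y = l * c" unfolding w_def using c_comb[of 1 y l z y] yy unfolding c_def by simp
  have wz: "\<beta> w z = t c" unfolding w_def using c_comb[of 1 y l z z] zz yz by simp
  have "\<beta> w w = \<beta> y w + l * \<beta> z w" unfolding w_def[of] using c_comb[of 1 y l z w] by (simp add: w_def)
  also have "\<beta> y w = t (l * c)" using hs[where x=w and y=y] wy by simp
  also have "\<beta> z w = c" using hs[where x=w and y=z] wz inv by simp
  finally have "\<beta> w w = t m + m" unfolding l_def using c0 by simp
  then have "\<beta> w w \<noteq> 0" using m by (simp add: add.commute)
  moreover have "\<forall>\<phi>\<in>set \<Psi>. \<beta> w \<phi> = 0" unfolding w_def using K_comb y(2) z(1) by blast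
  ultimately show False using na by blast
qed

lemma herm_iso:
  assumes fa: "field_aut t" and inv: "\<And>x. t (t x) = x" and nt: "\<exists>x. t x \<noteq> x"
    and hs: "\<And>x y. \<beta> y x = t (\<beta> x y)"
    and len: "length \<Phi> + 2 \<le> CARD('n)"
    and ndP: "\<And>y. \<forall>\<phi>\<in>set \<Phi>. \<beta> y \<phi> = 0 \<Longrightarrow> y \<noteq> 0 \<Longrightarrow> \<exists>v. (\<forall>\<phi>\<in>set \<Phi>. \<beta> v \<phi> = 0) \<and> \<beta> v y \<noteq> 0"
  shows "\<exists>e. e \<noteq> 0 \<and> \<beta> e e = 0 \<and> (\<forall>\<phi>\<in>set \<Phi>. \<beta> e \<phi> = 0)"
proof -
  note tp = field_aut_props[OF fa]
  obtain x1 where x1: "\<forall>\<phi>\<in>set \<Phi>. \<beta> x1 \<phi> = 0" "\<beta> x1 x1 \<noteq> 0"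
    using herm_stepA[OF fa inv nt hs _ ndP] len by force
  define a1 where "a1 = \<beta> x1 x1"
  have a1: "a1 \<noteq> 0" using x1(2) unfolding a1_def .
  have ndP2: "\<exists>v. (\<forall>\<phi>\<in>set (x1 # \<Phi>). \<beta> v \<phi> = 0) \<and> \<beta> v y \<noteq> 0"
    if y: "\<forall>\<phi>\<in>set (x1 # \<Phi>). \<beta> y \<phi> = 0" "y \<noteq> 0" for y
  proof -
    have "\<forall>\<phi>\<in>set \<Phi>. \<beta> y \<phi> = 0" using y(1) by simp
    then obtain v where v: "\<forall>\<phi>\<in>set \<Phi>. \<beta> v \<phi> = 0" "\<beta> v y \<noteq> 0" using ndP y(2) by blast
    define v' where "v' = 1 *s v + (- (\<beta> v x1 / a1)) *s x1"
    have "\<forall>\<phi>\<in>set \<Phi>. \<beta> v' \<phi> = 0" unfolding v'_def using K_comb v(1) x1(1) by blast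
    moreover have "\<beta> v' x1 = 0" unfolding v'_def using c_comb[of 1 v "- (\<beta> v x1 / a1)" x1 x1] a1
      unfolding a1_def by simp
    moreover have "\<beta> x1 y = 0" using y(1) brefl by auto
    then have "\<beta> v' y = \<beta> v y" unfolding v'_def using c_comb[of 1 v "- (\<beta> v x1 / a1)" x1 y] by simp
    ultimately show ?thesis using v(2) by auto
  qed
  obtain x2 where x2: "\<forall>\<phi>\<in>set (x1 # \<Phi>). \<beta> x2 \<phi> = 0" "\<beta> x2 x2 \<noteq> 0"
    using herm_stepA[OF fa inv nt hs _ ndP2] len by force
  define a2 where "a2 = \<beta> x2 x2"
  have a2: "a2 \<noteq> 0" using x2(2) unfolding a2_def .
  have x21: "\<beta> x2 x1 = 0" using x2(1) by simp
  have x12: "\<beta> x1 x2 = 0" using x21 brefl by blast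
  have ta1: "t a1 = a1" using hs[where x=x1 and y=x1] unfolding a1_def by simp
  have ta2: "t a2 = a2" using hs[where x=x2 and y=x2] unfolding a2_def by simp
  define c where "c = - (a2 / a1)"
  have tc: "t c = c" unfolding c_def using ta1 ta2 tp by simp
  have c0: "c \<noteq> 0" unfolding c_def using a1 a2 by simp
  obtain l where l: "l * t l = c" using norm_surj[OF fa inv nt tc c0] by blast
  define e where "e = l *s x1 + 1 *s x2"
  have ex1: "\<beta> e x1 = l * a1" unfolding e_def using c_comb[of l x1 1 x2 x1] x21 unfolding a1_def by simp
  have ex2: "\<beta> e x2 = a2" unfolding e_def using c_comb[of l x1 1 x2 x2] x12 unfolding a2_def by simp
  have "\<beta> e e = l * \<beta> x1 e + \<beta> x2 e" unfolding e_def using c_comb[of l x1 1 x2 "l *s x1 + 1 *s x2"] by simp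
  also have "\<beta> x1 e = t l * a1" using hs[where x=e and y=x1] ex1 tp ta1 by simp
  also have "\<beta> x2 e = a2" using hs[where x=e and y=x2] ex2 ta2 by simp
  finally have "\<beta> e e = c * a1 + a2" using l by (simp add: mult.assoc)
  then have ee: "\<beta> e e = 0" unfolding c_def using a1 by simp
  have "e \<noteq> 0" using ex2 a2 c_zero by auto
  moreover have "\<forall>\<phi>\<in>set \<Phi>. \<beta> x2 \<phi> = 0" using x2(1) by simp
  then have "\<forall>\<phi>\<in>set \<Phi>. \<beta> e \<phi> = 0" unfolding e_def using K_comb[OF x1(1)] by blast
  ultimately show ?thesis using ee by blast
qed

lemma orth_sing:
  fixes Q :: "'a^'n \<Rightarrow> 'a"
  assumes qa: "\<And>x y. Q (x + y) = Q x + Q y + \<beta> x y"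
    and qs: "\<And>c x. Q (c *s x) = c^2 * Q x"
    and sym: "\<And>x y. \<beta> x y = \<beta> y x"
    and len: "length \<Phi> + 3 \<le> CARD('n)"
  shows "\<exists>x. x \<noteq> 0 \<and> Q x = 0 \<and> (\<forall>\<phi>\<in>set \<Phi>. \<beta> x \<phi> = 0)"
proof (rule ccontr)
  assume na: "\<not> ?thesis"
  obtain x1 where x1: "x1 \<noteq> 0" "\<forall>\<phi>\<in>set \<Phi>. \<beta> x1 \<phi> = 0" using K_nonzero[of \<Phi>] len by force
  obtain x2 where x2: "\<forall>\<phi>\<in>set (x1 # \<Phi>). \<beta> x2 \<phi> = 0" "x2 \<notin> range (\<lambda>c. c *s x1)"
    using K_line[of "x1 # \<Phi>" x1] len by force
  obtain x3 where x3: "x3 \<noteq> 0" "\<forall>\<phi>\<in>set (x2 # x1 # \<Phi>). \<beta> x3 \<phi> = 0"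
    using K_nonzero[of "x2 # x1 # \<Phi>"] len by force
  have x2K: "\<forall>\<phi>\<in>set \<Phi>. \<beta> x2 \<phi> = 0" using x2(1) by simp
  have x3K: "\<forall>\<phi>\<in>set \<Phi>. \<beta> x3 \<phi> = 0" using x3(2) by simp
  have x2nz: "x2 \<noteq> 0" using x2(2) by (metis rangeI vector_smult_lzero)
  have b21: "\<beta> x2 x1 = 0" "\<beta> x1 x2 = 0" using x2(1) sym by auto
  have b3: "\<beta> x3 x1 = 0" "\<beta> x3 x2 = 0" "\<beta> x1 x3 = 0" "\<beta> x2 x3 = 0" using x3(2) sym by auto
  define a1 where "a1 = Q x1"
  define a2 where "a2 = Q x2"
  define a3 where "a3 = Q x3"
  have a1: "a1 \<noteq> 0" using na x1 unfolding a1_def by blast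
  have a2: "a2 \<noteq> 0" using na x2nz x2K unfolding a2_def by blast
  have a3: "a3 \<noteq> 0" using na x3 x3K unfolding a3_def by blast
  have bsc: "\<beta> x (c *s y) = c * \<beta> y x" for x y c using sym[of x "c *s y"] c_smult by simp
  show False
  proof (cases "(2::'a) = 0")
    case True
    obtain l where l: "l^2 = - (a2 / a1)" using sq_surj2[OF True] by blast
    define v where "v = l *s x1 + 1 *s x2"
    have "Q v = Q (l *s x1) + Q x2 + \<beta> (l *s x1) x2" unfolding v_def using qa by simp
    also have "\<dots> = l^2 * a1 + a2" using qs c_smult b21 unfolding a1_def a2_def by simp
    also have "\<dots> = 0" using l a1 by simp
    finally have Qv: "Q v = 0" .
    have "v \<noteq> 0"
    proof
      assume "v = 0"
      then have "x2 = (- l) *s x1" unfolding v_def by (simp add: vec_eq_iff algebra_simps eq_neg_iff_add_eq_0)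
      then show False using x2(2) by blast
    qed
    moreover have "\<forall>\<phi>\<in>set \<Phi>. \<beta> v \<phi> = 0" unfolding v_def using K_comb[OF x1(2) x2K] by blast
    ultimately show False using na Qv by blast
  next
    case False
    obtain l m where lm: "a1 * l^2 + a2 * m^2 = - a3" using sq_sum[OF a1 a2] by blast
    define w where "w = l *s x1 + m *s x2"
    define v where "v = w + x3"
    have "Q w = Q (l *s x1) + Q (m *s x2) + \<beta> (l *s x1) (m *s x2)" unfolding w_def by (rule qa)
    moreover have "\<beta> (l *s x1) (m *s x2) = l * \<beta> x1 (m *s x2)" by (rule c_smult)
    moreover have "\<beta> x1 (m *s x2) = 0" using bsc[of x1 m x2] b21 by simp
    ultimately have Qw: "Q w = l^2 * a1 + m^2 * a2" using qs unfolding a1_def a2_def by simp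
    have wx3: "\<beta> w x3 = 0" unfolding w_def using c_comb b3 by simp
    have "Q v = Q w + a3" unfolding v_def a3_def using qa wx3 by simp
    then have Qv: "Q v = 0" using Qw lm by (simp add: algebra_simps)
    have "(1 + 1::'a) *s x3 = x3 + x3" by (simp only: vector_sadd_rdistrib vector_smult_lid)
    then have "x3 + x3 = (2::'a) *s x3" by (simp only: one_add_one)
    then have "Q (x3 + x3) = 4 * a3" using qs[of 2 x3] unfolding a3_def by simp
    then have x33: "\<beta> x3 x3 = 2 * a3" using qa[of x3 x3] unfolding a3_def by simp
    have "\<beta> v x3 = 2 * a3" unfolding v_def using c_add wx3 x33 by simp
    then have "v \<noteq> 0" using False a3 c_zero by auto
    moreover have "\<forall>\<phi>\<in>set \<Phi>. \<beta> w \<phi> = 0" unfolding w_def using K_comb[OF x1(2) x2K] by blast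
    then have "\<forall>\<phi>\<in>set \<Phi>. \<beta> v \<phi> = 0" unfolding v_def using x3K c_add by simp
    ultimately show False using na Qv by blast
  qed
qed

end

lemma two_space_nz: "two_space W \<Longrightarrow> \<exists>v\<in>W. v \<noteq> 0"
  using two_spaceE indep_nz sp_x by metis

lemma symp_case:
  fixes X :: "('a::{field,finite}^'n::finite) set set" and H Gam :: "('a^'n \<Rightarrow> 'a^'n) set"
  assumes n4: "CARD('n) \<ge> 4" and B: "symplectic_form B" and XB: "X = {W. two_space W \<and> nondeg_subspace B W}"
    and HG: "H \<subseteq> simil_B B"
  shows "3 \<le> diam X (induced_perm X ` H)"
proof -
  have lin: "left_linear B" and rlin: "left_linear (\<lambda>u v. B v u)" and alt: "\<And>v. B v v = 0"
    and nd: "nondeg_form B" using B unfolding symplectic_form_def bilinear_form_def by blast+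
  have radd: "B x (y + z) = B x y + B x z" for x y z using rlin unfolding left_linear_def by blast
  have ladd: "B (x + y) z = B x z + B y z" for x y z using lin unfolding left_linear_def by blast
  have anti: "B x y = - B y x" for x y
  proof -
    have "0 = B (x + y) (x + y)" using alt by simp
    also have "\<dots> = B x x + B x y + (B y x + B y y)" using ladd radd by (simp add: ladd radd)
    finally show ?thesis using alt by (simp add: eq_neg_iff_add_eq_0)
  qed
  have brefl: "B x y = 0 \<longleftrightarrow> B y x = 0" for x y using anti[of x y] by simp
  obtain e :: "'a^'n" where e: "e \<noteq> 0" using K_nonzero[OF lin brefl, of "[]"] n4 by auto
  obtain f where f: "B f e = 1" using get_f[OF lin brefl nd e] by blast
  obtain e' where e': "e' \<noteq> 0" "\<forall>\<phi>\<in>set [e, f]. B e' \<phi> = 0"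
    using K_nonzero[OF lin brefl, of "[e, f]"] n4 by auto
  have X': "X = {W. two_space W \<and> nondeg_subspace B W \<and> (\<exists>v\<in>W. v \<noteq> 0 \<and> True)}"
    unfolding XB using two_space_nz by auto
  show ?thesis
  proof (rule gen_main[OF lin brefl X', where iso = "\<lambda>_. True" and e = e and f = f and e' = e'])
    fix h assume "h \<in> H"
    then have "h \<in> simil_B B" using HG by blast
    then show "\<exists>s l. semilinear_with s h \<and> l \<noteq> 0 \<and> (\<forall>x y. B (h x) (h y) = l * s (B x y))
               \<and> (\<forall>x. True \<longrightarrow> True) \<and> (\<forall>x. True \<longrightarrow> True)" unfolding simil_B_def by blast
  qed (use alt nd e f e' in auto)
qed

lemma herm_case:
  fixes X :: "('a::{field,finite}^'n::finite) set set" and H Gam :: "('a^'n \<Rightarrow> 'a^'n) set"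
  assumes n4: "CARD('n) \<ge> 4" and B: "hermitian_form t B" and XB: "X = {W. two_space W \<and> nondeg_subspace B W}"
    and HG: "H \<subseteq> simil_B B"
  shows "3 \<le> diam X (induced_perm X ` H)"
proof -
  have fa: "field_aut t" and inv: "\<And>x. t (t x) = x" and nt: "\<exists>x. t x \<noteq> x" and lin: "left_linear B"
    and hs: "\<And>u v. B v u = t (B u v)" and nd: "nondeg_form B"
    using B unfolding hermitian_form_def by blast+
  note tp = field_aut_props[OF fa]
  have brefl: "B x y = 0 \<longleftrightarrow> B y x = 0" for x y using hs[of x y] tp(7) by simp
  have hs': "\<And>x y. B y x = t (B x y)" using hs by blast
  have ndP0: "\<exists>v. (\<forall>\<phi>\<in>set []. B v \<phi> = 0) \<and> B v y \<noteq> 0" if y0: "y \<noteq> 0" for y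
  proof -
    obtain v where "B y v \<noteq> 0" using nd y0 unfolding nondeg_form_def by blast
    then show ?thesis using brefl by auto
  qed
  have "\<exists>e. e \<noteq> 0 \<and> B e e = 0 \<and> (\<forall>\<phi>\<in>set []. B e \<phi> = 0)"
    by (rule herm_iso[OF lin brefl fa inv nt hs']) (use n4 ndP0 in auto)
  then obtain e :: "'a^'n" where e: "e \<noteq> 0" "B e e = 0" by blast
  obtain f where f: "B f e = 1" using get_f[OF lin brefl nd e(1)] by blast
  have ndP: "\<exists>v. (\<forall>\<phi>\<in>set [e, f]. B v \<phi> = 0) \<and> B v y \<noteq> 0"
    if y: "\<forall>\<phi>\<in>set [e, f]. B y \<phi> = 0" "y \<noteq> 0" for y
  proof -
    obtain v where v: "B y v \<noteq> 0" using nd y(2) unfolding nondeg_form_def by blast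
    then have v': "B v y \<noteq> 0" using brefl by blast
    obtain w where w: "B w e = 0" "B w f = 0" "\<forall>z. B z e = 0 \<longrightarrow> B z f = 0 \<longrightarrow> B w z = B v z"
      using proj[OF lin brefl e(2) f, of v] by blast
    have "B w y = B v y" using w(3) y(1) by simp
    then show ?thesis using w v' by auto
  qed
  have "\<exists>e'. e' \<noteq> 0 \<and> B e' e' = 0 \<and> (\<forall>\<phi>\<in>set [e, f]. B e' \<phi> = 0)"
    by (rule herm_iso[OF lin brefl fa inv nt hs']) (use n4 ndP in auto)
  then obtain e' :: "'a^'n" where e': "e' \<noteq> 0" "B e' e' = 0" "\<forall>\<phi>\<in>set [e, f]. B e' \<phi> = 0" by blast
  have X': "X = {W. two_space W \<and> nondeg_subspace B W \<and> (\<exists>v\<in>W. v \<noteq> 0 \<and> True)}"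
    unfolding XB using two_space_nz by auto
  show ?thesis
  proof (rule gen_main[OF lin brefl X', where iso = "\<lambda>x. B x x = 0" and e = e and f = f and e' = e'])
    fix h assume "h \<in> H"
    then have "h \<in> simil_B B" using HG by blast
    then obtain s l where sl: "semilinear_with s h" "l \<noteq> 0" "\<forall>x y. B (h x) (h y) = l * s (B x y)"
      unfolding simil_B_def by blast
    have "s 0 = 0" using field_aut_basic(1) semi_basic(4)[OF sl(1)] by blast
    then have "\<forall>x. B x x = 0 \<longrightarrow> B (h x) (h x) = 0" using sl(3) by simp
    then show "\<exists>s l. semilinear_with s h \<and> l \<noteq> 0 \<and> (\<forall>x y. B (h x) (h y) = l * s (B x y))
               \<and> (\<forall>x. B x x = 0 \<longrightarrow> B (h x) (h x) = 0) \<and> (\<forall>x. True \<longrightarrow> True)" using sl by blast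
  qed (use nd e f e' in auto)
qed

lemma orth_case:
  fixes X :: "('a::{field,finite}^'n::finite) set set" and H Gam :: "('a^'n \<Rightarrow> 'a^'n) set"
  assumes n4: "CARD('n) \<ge> 4" and Q: "nondeg_quadratic_form Q"
    and tot: "CARD('n) = 4 \<longrightarrow> has_tot_singular_2space Q"
    and XQ: "X = {W. two_space W \<and> nondeg_subspace (polar Q) W \<and> (\<exists>v\<in>W. v \<noteq> 0 \<and> Q v = 0)}"
    and HG: "H \<subseteq> simil_Q Q"
  shows "3 \<le> diam X (induced_perm X ` H)"
proof -
  have qs: "\<And>c v. Q (c *s v) = c^2 * Q v" and lin: "left_linear (polar Q)" and nd: "nondeg_form (polar Q)"
    using Q unfolding nondeg_quadratic_form_def bilinear_form_def by blast+
  have sym: "polar Q x y = polar Q y x" for x y unfolding polar_def by (simp add: add.commute)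
  have brefl: "polar Q x y = 0 \<longleftrightarrow> polar Q y x = 0" for x y using sym[of x y] by simp
  have qa: "Q (x + y) = Q x + Q y + polar Q x y" for x y unfolding polar_def by simp
  have iso0: "polar Q x x = 0" if "Q x = 0" for x
  proof -
    have "(1 + 1::'a) *s x = x + x" by (simp only: vector_sadd_rdistrib vector_smult_lid)
    then have "x + x = (2::'a) *s x" by (simp only: one_add_one)
    then have "Q (x + x) = 0" using qs[of 2 x] that by simp
    then show ?thesis using qa[of x x] that by simp
  qed
  have "\<exists>e f e'. e \<noteq> 0 \<and> Q e = 0 \<and> polar Q f e = 1 \<and> e' \<noteq> 0 \<and> Q e' = 0 \<and> polar Q e' e = 0 \<and> polar Q e' f = 0"
  proof (cases "CARD('n) = 4")
    case True
    then obtain W where W: "two_space W" "\<forall>w\<in>W. Q w = 0" using tot unfolding has_tot_singular_2space_def by blast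
    obtain a b where ab: "indep a b" "W = sp a b" using W(1) two_spaceE by blast
    have a0: "a \<noteq> 0" using indep_nz[OF ab(1)] .
    have Qa: "Q a = 0" using W(2) ab(2) sp_x by blast
    obtain f where f: "polar Q f a = 1" using get_f[OF lin brefl nd a0] by blast
    define x where "x = polar Q b f"
    define e' where "e' = (- x) *s a + 1 *s b"
    have "e' \<in> W" unfolding e'_def ab(2) by (rule sp_mem)
    then have Qe': "Q e' = 0" using W(2) by blast
    have "a + b \<in> W" unfolding ab(2) using sp_mem[of 1 a 1 b] by simp
    then have "Q (a + b) = 0" using W(2) by blast
    moreover have "Q b = 0" using W(2) ab(2) sp_y by blast
    ultimately have pba: "polar Q b a = 0" using qa[of a b] Qa sym by simp
    have "polar Q e' a = (- x) * polar Q a a + 1 * polar Q b a" unfolding e'_def by (rule b_comb[OF lin brefl])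
    then have e'a: "polar Q e' a = 0" using iso0[OF Qa] pba by simp
    have "polar Q e' f = (- x) * polar Q a f + 1 * polar Q b f" unfolding e'_def by (rule b_comb[OF lin brefl])
    moreover have "polar Q a f = 1" using f sym by simp
    ultimately have e'f: "polar Q e' f = 0" unfolding x_def by simp
    have "e' \<noteq> 0" using ab(1) unfolding e'_def indep_def by fastforce
    then show ?thesis using a0 Qa f Qe' e'a e'f by blast
  next
    case False
    then have n5: "CARD('n) \<ge> 5" using n4 by simp
    have "\<exists>e. e \<noteq> 0 \<and> Q e = 0 \<and> (\<forall>\<phi>\<in>set []. polar Q e \<phi> = 0)"
      by (rule orth_sing[OF lin brefl qa qs sym]) (use n5 in simp)
    then obtain e :: "'a^'n" where e: "e \<noteq> 0" "Q e = 0" by blast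
    obtain f where f: "polar Q f e = 1" using get_f[OF lin brefl nd e(1)] by blast
    have "\<exists>e'. e' \<noteq> 0 \<and> Q e' = 0 \<and> (\<forall>\<phi>\<in>set [e, f]. polar Q e' \<phi> = 0)"
      by (rule orth_sing[OF lin brefl qa qs sym]) (use n5 in simp)
    then obtain e' where e': "e' \<noteq> 0" "Q e' = 0" "\<forall>\<phi>\<in>set [e, f]. polar Q e' \<phi> = 0" by blast
    then show ?thesis using e f by auto
  qed
  then obtain e f e' where ef: "e \<noteq> 0" "Q e = 0" "polar Q f e = 1" "e' \<noteq> 0" "Q e' = 0"
    "polar Q e' e = 0" "polar Q e' f = 0" by blast
  show ?thesis
  proof (rule gen_main[OF lin brefl XQ, where iso = "\<lambda>x. Q x = 0" and e = e and f = f and e' = e'])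
    fix h assume "h \<in> H"
    then have "h \<in> simil_Q Q" using HG by blast
    then obtain s l where sl: "semilinear_with s h" "l \<noteq> 0" "\<forall>v. Q (h v) = l * s (Q v)"
      unfolding simil_Q_def by blast
    have fa: "field_aut s" using semi_basic(4)[OF sl(1)] .
    have hadd: "h (x + y) = h x + h y" for x y using sl(1) unfolding semilinear_with_def by blast
    have "polar Q (h x) (h y) = l * s (polar Q x y)" for x y
    proof -
      have "polar Q (h x) (h y) = Q (h (x + y)) - Q (h x) - Q (h y)" unfolding polar_def hadd ..
      also have "\<dots> = l * (s (Q (x + y)) - s (Q x) - s (Q y))" using sl(3) by (simp add: algebra_simps)
      also have "\<dots> = l * s (polar Q x y)" unfolding polar_def using field_aut_basic(3)[OF fa] by simp
      finally show ?thesis .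
    qed
    moreover have "\<forall>x. Q x = 0 \<longrightarrow> Q (h x) = 0" using sl(3) field_aut_basic(1)[OF fa] by simp
    ultimately show "\<exists>s l. semilinear_with s h \<and> l \<noteq> 0 \<and> (\<forall>x y. polar Q (h x) (h y) = l * s (polar Q x y))
               \<and> (\<forall>x. Q x = 0 \<longrightarrow> Q (h x) = 0) \<and> (\<forall>x. Q x = 0 \<longrightarrow> Q (h x) = 0)" using sl by blast
  qed (use nd ef iso0 in auto)
qed

theorem mainTheorem13:
  fixes X :: "('a::{field,finite}^'n::finite) set set"
    and Om Gam H :: "('a^'n \<Rightarrow> 'a^'n) set"
  assumes "CARD('n) \<ge> 4"
    and "classical_setting X Om Gam"
    and "subgroup H GV"
    and "Om \<subseteq> H" and "H \<subseteq> Gam"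
    and "almost_simple_with_socle (perm_group X (induced_perm X ` H)) (induced_perm X ` Om)"
    and "primitive_on X (induced_perm X ` H)"
  shows "diam X (induced_perm X ` H) \<ge> 3"
  using assms(2) unfolding classical_setting_def
proof (elim disjE exE conjE)
  fix B assume "symplectic_form B" "X = {W. two_space W \<and> nondeg_subspace B W}" "Gam = simil_B B"
  then show ?thesis using symp_case[OF assms(1)] assms(5) by blast
next
  fix t B assume "hermitian_form t B" "X = {W. two_space W \<and> nondeg_subspace B W}" "Gam = simil_B B"
  then show ?thesis using herm_case[OF assms(1)] assms(5) by blast
next
  fix Q assume "nondeg_quadratic_form Q" "CARD('n) = 4 \<longrightarrow> has_tot_singular_2space Q"
    "X = {W. two_space W \<and> nondeg_subspace (polar Q) W \<and> (\<exists>v\<in>W. v \<noteq> 0 \<and> Q v = 0)}" "Gam = simil_Q Q"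
  then show ?thesis using orth_case[OF assms(1)] assms(5) by blast
qed

end
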